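(* Let $n\ge0$ and $l\ge0$. In $H^*(\operatorname{Gr}_2(\mathbb{R}^{2^{n+1}+1+2l});\mathbb{Z}/2)$, $$Q_n(w_2^{2l+1}) = w_1^{2l+2}\bar w_{2^{n+1}-1+2l}.$$
   Context: $H^*(\operatorname{Gr}_2(\mathbb{R}^m);\mathbb{Z}/2)=\mathbb{Z}/2[w_1,w_2]/(\bar w_k : k\ge m-1)$, where $w_1,w_2$ are Stiefel–Whitney classes of the tautological bundle and $\bar w_k$ are defined by $(1+w_1+w_2)(1+\bar w_1+\bar w_2+\cdots)=1$. $Q_n$ is the Milnor primitive: $Q_0=Sq^1$, $Q_n=[Q_{n-1},Sq^{2^n}]$. *)

theory Defs
  imports "HOL-Computational_Algebra.Polynomial" "HOL-Library.Z2"
begin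

text \<open>Model of H^*(BO(2); Z/2) = F_2[w1,w2] as bivariate polynomials over the field
  Z/2 (type bit): an element p :: bit poly poly is a polynomial in w2 whose
  coefficients are polynomials in w1. The monomial w1^a w2^b has coefficient
  coeff (coeff p b) a and cohomological degree a + 2b.\<close>

type_synonym F2poly = "bit poly poly"

definition w1 :: F2poly where "w1 = [:[:0, 1:]:]"
definition w2 :: F2poly where "w2 = [:0, 1:]"

definition const :: "bit \<Rightarrow> F2poly" where "const c = [:[:c:]:]"

definition mon :: "nat \<Rightarrow> nat \<Rightarrow> F2poly" where "mon a b = monom (monom 1 a) b"

definition hom_part :: "nat \<Rightarrow> F2poly \<Rightarrow> F2poly" where
  "hom_part d p = (\<Sum>b\<le>d. \<Sum>a\<le>d. if a + 2 * b = d then const (coeff (coeff p b) a) * mon a b else 0)"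

text \<open>Steenrod squares on F_2[w1,w2]: the total square is the ring homomorphism with
  Sq(w1) = w1 + w1^2 and Sq(w2) = w2 + w1 w2 + w2^2 (Wu formula, Cartan formula);
  Sq^i picks the part raising degree by i.\<close>
definition Sq :: "nat \<Rightarrow> F2poly \<Rightarrow> F2poly" where
  "Sq i p = (\<Sum>b\<le>degree p. \<Sum>a\<le>degree (coeff p b).
      const (coeff (coeff p b) a) *
      hom_part (a + 2 * b + i) ((w1 + w1 ^ 2) ^ a * (w2 + w1 * w2 + w2 ^ 2) ^ b))"

fun Q :: "nat \<Rightarrow> F2poly \<Rightarrow> F2poly" where
  "Q 0 p = Sq 1 p"
| "Q (Suc n) p = Q n (Sq (2 ^ Suc n) p) - Sq (2 ^ Suc n) (Q n p)"

text \<open>Dual classes: (1 + w1 + w2)(1 + wbar_1 + wbar_2 + ...) = 1, i.e.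
  wbar_0 = 1 and wbar_k + w1 wbar_{k-1} + w2 wbar_{k-2} = 0 (wbar_{-1} = 0).\<close>
fun wbar :: "nat \<Rightarrow> F2poly" where
  "wbar 0 = 1"
| "wbar (Suc 0) = - w1"
| "wbar (Suc (Suc k)) = - (w1 * wbar (Suc k) + w2 * wbar k)"

text \<open>The ideal (wbar_k : k \<ge> m - 1) of F_2[w1,w2]; H^*(Gr_2(R^m); Z/2) is the quotient.\<close>
definition gr_ideal :: "nat \<Rightarrow> F2poly set" where
  "gr_ideal m = {p. \<exists>K c. p = (\<Sum>k\<in>{m - 1..K}. c k * wbar k)}"

definition eq_in_Gr2 :: "nat \<Rightarrow> F2poly \<Rightarrow> F2poly \<Rightarrow> bool" where
  "eq_in_Gr2 m p q \<longleftrightarrow> p - q \<in> gr_ideal m"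

end

theory Submission
  imports Defs
begin


declare add_bit_eq_xor [simp del] mult_bit_eq_and [simp del]

lemma bit_add_self [simp]: "(x::bit) + x = 0"
  by (metis bit_2_eq_0 mult_2 mult_zero_left one_add_one distrib_right) 

lemma bp_add_self [simp]: "(p::bit poly) + p = 0"
  by (simp only: poly_eq_iff coeff_add bit_add_self coeff_0 simp_thms)

lemma F2_add_self [simp]: "(p::F2poly) + p = 0"
  by (simp only: poly_eq_iff coeff_add bp_add_self coeff_0 simp_thms)

lemma F2_neg [simp]: "- (p::F2poly) = p"
  by (simp add: poly_eq_iff)

lemma F2P_add_self [simp]: "(p::F2poly poly) + p = 0"
  by (simp only: poly_eq_iff coeff_add F2_add_self coeff_0 simp_thms)

lemma F2P_neg [simp]: "- (p::F2poly poly) = p"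
  by (simp add: poly_eq_iff)

lemma F2_minus [simp]: "(p::F2poly) - q = p + q"
  by (metis F2_neg diff_conv_add_uminus)

lemma F2P_minus [simp]: "(p::F2poly poly) - q = p + q"
  by (metis F2P_neg diff_conv_add_uminus)

lemma F2_two [simp]: "(2::F2poly) = 0"
  by (metis F2_add_self one_add_one)

lemma F2P_two [simp]: "(2::F2poly poly) = 0"
  by (metis F2P_add_self one_add_one)

lemma char2_sq: "(2::'a::comm_ring_1) = 0 \<Longrightarrow> (x + y)^2 = x^2 + (y::'a)^2"
  by (simp add: power2_eq_square algebra_simps mult_2[symmetric])

lemma char2_frob: "(2::'a::comm_ring_1) = 0 \<Longrightarrow> (x + y)^(2^j) = x^(2^j) + (y::'a)^(2^j)"
proof (induction j)
  case 0 then show ?case by simp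
next
  case (Suc j)
  have "(x + y)^(2^Suc j) = ((x+y)^(2^j))^2" by (simp add: power_mult[symmetric] mult.commute)
  also have "\<dots> = (x^(2^j))^2 + (y^(2^j))^2" using Suc by (simp add: char2_sq)
  also have "\<dots> = x^(2^Suc j) + y^(2^Suc j)" by (simp add: power_mult[symmetric] mult.commute)
  finally show ?case .
qed

definition rh :: "('a::comm_ring_1 \<Rightarrow> 'b::comm_ring_1) \<Rightarrow> bool" where
  "rh h \<longleftrightarrow> h 0 = 0 \<and> h 1 = 1 \<and> (\<forall>a b. h (a + b) = h a + h b) \<and> (\<forall>a b. h (a * b) = h a * h b)"

lemma rhD:
  assumes "rh h"
  shows "h 0 = 0" "h 1 = 1" "h (a + b) = h a + h b" "h (a * b) = h a * h b"
  using assms by (auto simp: rh_def)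

lemma rh_sum: "rh h \<Longrightarrow> h (sum g A) = (\<Sum>x\<in>A. h (g x))"
  using sum_comp_morphism[of h g A] by (auto simp: rhD o_def)

lemma rh_uminus: assumes "rh h" shows "h (- a) = - h a"
proof -
  have "h (- a) + h a = h (- a + a)" by (rule rhD(3)[OF assms, symmetric])
  also have "\<dots> = 0" by (simp add: rhD(1)[OF assms])
  finally show ?thesis by (simp add: eq_neg_iff_add_eq_0)
qed

lemma rh_minus: assumes "rh h" shows "h (a - b) = h a - h b"
proof -
  have "h (a - b) = h (a + - b)" by simp
  also have "\<dots> = h a + h (- b)" by (rule rhD(3)[OF assms])
  also have "\<dots> = h a - h b" by (simp add: rh_uminus[OF assms])
  finally show ?thesis .
qed

lemma rh_power: "rh h \<Longrightarrow> h (a ^ n) = h a ^ n"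
  by (induction n) (auto simp: rhD)

lemma rh_comp: "rh f \<Longrightarrow> rh g \<Longrightarrow> rh (f \<circ> g)"
  by (auto simp: rh_def)

lemma rh_map_poly: assumes "rh h" shows "rh (map_poly h)"
proof -
  have h0: "h 0 = 0" using rhD[OF assms] by simp
  show ?thesis unfolding rh_def
  proof (intro conjI allI)
    show "map_poly h 0 = 0" by simp
    show "map_poly h 1 = 1" using rhD[OF assms] by simp
    fix a b
    show "map_poly h (a + b) = map_poly h a + map_poly h b"
      by (simp add: poly_eq_iff coeff_map_poly h0 rhD[OF assms])
    show "map_poly h (a * b) = map_poly h a * map_poly h b"
      by (simp add: poly_eq_iff coeff_map_poly h0 coeff_mult rh_sum[OF assms] rhD[OF assms])
  qed
qed

lemma rh_poly: "rh (\<lambda>p. poly p x)"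
  by (simp add: rh_def)

lemma rh_coeff0: "rh (\<lambda>p. coeff p 0)"
  by (simp add: rh_def coeff_mult_0)

definition ev :: "(bit \<Rightarrow> 'a::comm_ring_1) \<Rightarrow> 'a \<Rightarrow> 'a \<Rightarrow> F2poly \<Rightarrow> 'a" where
  "ev h f g p = poly (map_poly (\<lambda>c. poly (map_poly h c) f) p) g"

lemma rh_ev: assumes "rh h" shows "rh (ev h f g)"
proof -
  have "rh ((\<lambda>c. poly c f) \<circ> map_poly h)" by (intro rh_comp rh_poly rh_map_poly assms)
  then have "rh (map_poly ((\<lambda>c. poly c f) \<circ> map_poly h))" by (rule rh_map_poly)
  then have "rh ((\<lambda>P. poly P g) \<circ> map_poly ((\<lambda>c. poly c f) \<circ> map_poly h))" by (intro rh_comp rh_poly)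
  then show ?thesis unfolding ev_def[abs_def] o_def by simp
qed

lemma ev_const [simp]: "rh h \<Longrightarrow> ev h f g (const c) = h c"
  by (simp add: ev_def const_def rhD map_poly_pCons)

lemma ev_w1 [simp]: "rh h \<Longrightarrow> ev h f g w1 = f"
  by (simp add: ev_def w1_def rhD map_poly_pCons)

lemma ev_w2 [simp]: "rh h \<Longrightarrow> ev h f g w2 = g"
  by (simp add: ev_def w2_def rhD map_poly_pCons)

lemma const_pow: "[:x:] ^ n = [:x ^ n:]"
  by (induction n) (auto simp: mult.commute)

lemma mon_eq: "mon a b = w1 ^ a * w2 ^ b"
  by (simp add: mon_def w1_def w2_def const_pow monom_altdef)

lemma const_mon: "const c * mon a b = monom (monom c a) b"
  by (simp add: const_def mon_def smult_monom)

lemma SM: "p = (\<Sum>b\<le>degree p. \<Sum>a\<le>degree (coeff p b). const (coeff (coeff p b) a) * mon a b)"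
proof -
  have "(\<Sum>b\<le>degree p. \<Sum>a\<le>degree (coeff p b). const (coeff (coeff p b) a) * mon a b)
     = (\<Sum>b\<le>degree p. monom (\<Sum>a\<le>degree (coeff p b). monom (coeff (coeff p b) a) a) b)"
    by (simp add: const_mon monom_sum)
  also have "\<dots> = (\<Sum>b\<le>degree p. monom (coeff p b) b)"
    by (simp add: poly_as_sum_of_monoms)
  also have "\<dots> = p" by (simp add: poly_as_sum_of_monoms)
  finally show ?thesis by simp
qed

lemma rh_unique:
  assumes F: "rh F" and G: "rh G" and c: "\<And>c. F (const c) = G (const c)"
    and 1: "F w1 = G w1" and 2: "F w2 = G w2"
  shows "F p = G p"
proof -
  have "F p = F (\<Sum>b\<le>degree p. \<Sum>a\<le>degree (coeff p b). const (coeff (coeff p b) a) * mon a b)"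
    by (rule arg_cong[OF SM])
  also have "\<dots> = G (\<Sum>b\<le>degree p. \<Sum>a\<le>degree (coeff p b). const (coeff (coeff p b) a) * mon a b)"
    by (simp add: rh_sum[OF F] rh_sum[OF G] rhD(4)[OF F] rhD(4)[OF G] rh_power[OF F] rh_power[OF G] mon_eq c 1 2)
  also have "\<dots> = G p" by (rule arg_cong[OF SM[symmetric]])
  finally show ?thesis .
qed

definition der :: "(F2poly \<Rightarrow> F2poly) \<Rightarrow> bool" where
  "der D \<longleftrightarrow> (\<forall>p q. D (p + q) = D p + D q) \<and> (\<forall>p q. D (p * q) = D p * q + p * D q)"

lemma derD:
  assumes "der D"
  shows "D (p + q) = D p + D q" "D (p * q) = D p * q + p * D q"
  using assms by (auto simp: der_def)

lemma der_0: "der D \<Longrightarrow> D 0 = 0"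
  by (metis derD(1) add_0 add_cancel_right_right)

lemma der_1: assumes "der D" shows "D 1 = 0"
proof -
  have "D 1 = D (1 * 1)" by simp
  also have "\<dots> = D 1 * 1 + 1 * D 1" by (rule derD(2)[OF assms])
  also have "\<dots> = 0" by simp
  finally show ?thesis .
qed

lemma der_const: "der D \<Longrightarrow> D (const c) = 0"
  by (cases "c = 0") (auto simp: const_def der_0 der_1 one_pCons[symmetric] bit_not_zero_iff)

lemma der_sum: "der D \<Longrightarrow> D (sum g A) = (\<Sum>x\<in>A. D (g x))"
  using sum_comp_morphism[of D g A] by (auto simp: derD der_0 o_def)

lemma der_pow_unique: "der D1 \<Longrightarrow> der D2 \<Longrightarrow> D1 x = D2 x \<Longrightarrow> D1 (x ^ n) = D2 (x ^ n)"
  by (induction n) (auto simp: derD der_1)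

lemma der_unique:
  assumes D1: "der D1" and D2: "der D2" and 1: "D1 w1 = D2 w1" and 2: "D1 w2 = D2 w2"
  shows "D1 p = D2 p"
proof -
  have "D1 p = D1 (\<Sum>b\<le>degree p. \<Sum>a\<le>degree (coeff p b). const (coeff (coeff p b) a) * mon a b)"
    by (rule arg_cong[OF SM])
  also have "\<dots> = D2 (\<Sum>b\<le>degree p. \<Sum>a\<le>degree (coeff p b). const (coeff (coeff p b) a) * mon a b)"
    by (simp add: der_sum[OF D1] der_sum[OF D2] derD(2)[OF D1] derD(2)[OF D2] der_const[OF D1]
        der_const[OF D2] mon_eq der_pow_unique[OF D1 D2 1] der_pow_unique[OF D1 D2 2])
  also have "\<dots> = D2 p" by (rule arg_cong[OF SM[symmetric]])
  finally show ?thesis .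
qed

lemma der_zero: assumes "der D" "D w1 = 0" "D w2 = 0" shows "D p = 0"
proof -
  have d0: "der (\<lambda>_. 0)" by (simp add: der_def)
  show ?thesis using der_unique[OF assms(1) d0] assms(2,3) by simp
qed

lemma rh_const: "rh const"
  by (simp add: rh_def const_def one_pCons)

lemma rh_constT: "rh (\<lambda>c. [:const c:])"
  by (simp add: rh_def const_def one_pCons)




definition ev_s :: "F2poly \<Rightarrow> F2poly poly" where
  "ev_s = ev (\<lambda>c. [:const c:]) (monom w1 1) (monom w2 2)"

lemma rh_ev_s: "rh ev_s"
  unfolding ev_s_def by (intro rh_ev rh_constT)

lemma ev_s_simps [simp]: "ev_s (const c) = [:const c:]" "ev_s w1 = monom w1 1" "ev_s w2 = monom w2 2"
  by (simp_all add: ev_s_def rh_constT)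

lemma const0 [simp]: "const 0 = 0"
  by (simp add: const_def)

lemma ev_s_mon: "ev_s (const c * mon a b) = monom (const c * mon a b) (a + 2 * b)"
proof -
  have "ev_s (const c * mon a b) = [:const c:] * monom w1 1 ^ a * monom w2 2 ^ b"
    by (simp add: mon_eq rhD(4)[OF rh_ev_s] rh_power[OF rh_ev_s] mult.assoc)
  also have "\<dots> = monom (const c * mon a b) (a + 2 * b)"
    by (simp add: monom_power mult_monom smult_monom mon_eq mult.assoc mult.commute)
  finally show ?thesis .
qed

lemma hom_part_mon: "hom_part e (const c * mon a b) = (if a + 2 * b = e then const c * mon a b else 0)"
proof -
  define V where "V = (if a + 2 * b = e then const c * mon a b else 0)"
  have eq: "\<And>a' b'. (if a' + 2 * b' = e then const (coeff (coeff (const c * mon a b) b') a') * mon a' b' else 0)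
      = (if b' = b then (if a' = a then V else 0) else 0)"
    by (auto simp: const_mon V_def)
  have "hom_part e (const c * mon a b) = (\<Sum>b'\<le>e. if b' = b then (\<Sum>a'\<le>e. if a' = a then V else 0) else 0)"
    unfolding hom_part_def eq by (intro sum.cong) auto
  also have "\<dots> = (if b \<le> e then (if a \<le> e then V else 0) else 0)"
    by simp
  also have "\<dots> = V" by (auto simp: V_def)
  finally show ?thesis by (simp add: V_def)
qed

lemma hom_part_add: "hom_part e (p + q) = hom_part e p + hom_part e q"
proof -
  have "\<And>a b. (if a + 2 * b = e then const (coeff (coeff (p + q) b) a) * mon a b else 0)
    = (if a + 2 * b = e then const (coeff (coeff p b) a) * mon a b else 0)
      + (if a + 2 * b = e then const (coeff (coeff q b) a) * mon a b else 0)"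
    by (simp add: rhD(3)[OF rh_const] distrib_right)
  then show ?thesis unfolding hom_part_def by (simp only: sum.distrib)
qed

lemma hom_part_0: "hom_part e 0 = 0"
proof -
  have "\<And>a b. (if a + 2 * b = e then const (coeff (coeff 0 b) a) * mon a b else 0) = 0"
    by simp
  then show ?thesis unfolding hom_part_def by simp
qed

lemma hom_part_sum: "hom_part e (sum g A) = (\<Sum>x\<in>A. hom_part e (g x))"
  using sum_comp_morphism[of "hom_part e" g A] by (auto simp: hom_part_add hom_part_0 o_def)

lemma HP: "hom_part e q = coeff (ev_s q) e"
proof -
  have "hom_part e q = hom_part e (\<Sum>b\<le>degree q. \<Sum>a\<le>degree (coeff q b). const (coeff (coeff q b) a) * mon a b)"
    by (rule arg_cong[OF SM])
  also have "\<dots> = coeff (ev_s (\<Sum>b\<le>degree q. \<Sum>a\<le>degree (coeff q b). const (coeff (coeff q b) a) * mon a b)) e"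
    by (simp add: hom_part_sum rh_sum[OF rh_ev_s] coeff_sum hom_part_mon ev_s_mon)
  also have "\<dots> = coeff (ev_s q) e" by (rule arg_cong[OF SM[symmetric]])
  finally show ?thesis .
qed

definition graded :: "nat \<Rightarrow> F2poly poly \<Rightarrow> bool" where
  "graded d Z \<longleftrightarrow> (\<forall>j. ev_s (coeff Z j) = monom (coeff Z j) (d + j))"

lemma graded_mult:
  assumes "graded d1 Z1" "graded d2 Z2"
  shows "graded (d1 + d2) (Z1 * Z2)"
  unfolding graded_def
proof
  fix j
  have "ev_s (coeff (Z1 * Z2) j) = (\<Sum>i\<le>j. ev_s (coeff Z1 i) * ev_s (coeff Z2 (j - i)))"
    by (simp add: coeff_mult rh_sum[OF rh_ev_s] rhD(4)[OF rh_ev_s])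
  also have "\<dots> = (\<Sum>i\<le>j. monom (coeff Z1 i * coeff Z2 (j - i)) (d1 + d2 + j))"
    using assms unfolding graded_def by (intro sum.cong) (auto simp: mult_monom add.assoc)
  also have "\<dots> = monom (coeff (Z1 * Z2) j) (d1 + d2 + j)"
    by (simp add: coeff_mult monom_sum)
  finally show "ev_s (coeff (Z1 * Z2) j) = monom (coeff (Z1 * Z2) j) (d1 + d2 + j)" .
qed

lemma graded_one: "graded 0 1"
  unfolding graded_def by (auto simp: coeff_1 rhD[OF rh_ev_s])

lemma graded_power: "graded d Z \<Longrightarrow> graded (n * d) (Z ^ n)"
  by (induction n) (auto simp: graded_one dest: graded_mult)

lemma graded_T1: "graded 1 [:w1, w1 ^ 2:]"
  unfolding graded_def
proof
  fix j
  show "ev_s (coeff [:w1, w1 ^ 2:] j) = monom (coeff [:w1, w1 ^ 2:] j) (1 + j)"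
    by (cases j; cases "j - 1")
       (auto simp: rhD[OF rh_ev_s] rh_power[OF rh_ev_s] monom_power coeff_pCons numeral_2_eq_2 mult_monom)
qed

lemma graded_T2: "graded 2 [:w2, w1 * w2, w2 ^ 2:]"
  unfolding graded_def
proof
  fix j
  show "ev_s (coeff [:w2, w1 * w2, w2 ^ 2:] j) = monom (coeff [:w2, w1 * w2, w2 ^ 2:] j) (2 + j)"
    by (cases j; cases "j - 1"; cases "j - 2")
       (auto simp: rhD[OF rh_ev_s] rh_power[OF rh_ev_s] monom_power coeff_pCons mult_monom numeral_2_eq_2 numeral_3_eq_3)
qed

lemma graded_hp:
  assumes "graded d Z"
  shows "hom_part (d + i) (poly Z 1) = coeff Z i"
proof -
  have "hom_part (d + i) (poly Z 1) = coeff (ev_s (\<Sum>j\<le>degree Z. coeff Z j)) (d + i)"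
    by (simp add: HP poly_altdef)
  also have "\<dots> = (\<Sum>j\<le>degree Z. coeff (monom (coeff Z j) (d + j)) (d + i))"
    using assms by (simp add: rh_sum[OF rh_ev_s] coeff_sum graded_def)
  also have "\<dots> = (\<Sum>j\<le>degree Z. if j = i then coeff Z i else 0)"
    by (intro sum.cong) auto
  also have "\<dots> = coeff Z i"
    by (auto simp: coeff_eq_0)
  finally show ?thesis .
qed

definition T :: "F2poly \<Rightarrow> F2poly poly" where
  "T = ev (\<lambda>c. [:const c:]) [:w1, w1 ^ 2:] [:w2, w1 * w2, w2 ^ 2:]"

lemma rh_T: "rh T"
  unfolding T_def by (intro rh_ev rh_constT)

lemma T_simps [simp]: "T (const c) = [:const c:]" "T w1 = [:w1, w1 ^ 2:]" "T w2 = [:w2, w1 * w2, w2 ^ 2:]"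
  by (simp_all add: T_def rh_constT)

lemma Sq_mon: "hom_part (a + 2 * b + i) ((w1 + w1 ^ 2) ^ a * (w2 + w1 * w2 + w2 ^ 2) ^ b) = coeff (T (mon a b)) i"
proof -
  have Z: "T (mon a b) = [:w1, w1 ^ 2:] ^ a * [:w2, w1 * w2, w2 ^ 2:] ^ b"
    by (simp add: mon_eq rhD(4)[OF rh_T] rh_power[OF rh_T])
  have g: "graded (a + 2 * b) (T (mon a b))"
    unfolding Z using graded_mult[OF graded_power[OF graded_T1] graded_power[OF graded_T2]]
    by (simp add: mult.commute)
  have "poly (T (mon a b)) 1 = (w1 + w1 ^ 2) ^ a * (w2 + w1 * w2 + w2 ^ 2) ^ b"
    unfolding Z by (simp add: add.assoc)
  then show ?thesis using graded_hp[OF g, of i] by simp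
qed

lemma Sq_T: "Sq i p = coeff (T p) i"
proof -
  have "Sq i p = (\<Sum>b\<le>degree p. \<Sum>a\<le>degree (coeff p b). const (coeff (coeff p b) a) * coeff (T (mon a b)) i)"
    unfolding Sq_def Sq_mon ..
  also have "\<dots> = coeff (T (\<Sum>b\<le>degree p. \<Sum>a\<le>degree (coeff p b). const (coeff (coeff p b) a) * mon a b)) i"
    by (simp add: rh_sum[OF rh_T] rhD(4)[OF rh_T] coeff_sum)
  also have "\<dots> = coeff (T p) i" by (rule arg_cong[OF SM[symmetric]])
  finally show ?thesis .
qed


definition phi :: "F2poly \<Rightarrow> F2poly" where
  "phi = ev const (w1 + w2) (w1 * w2)"

lemma rh_phi: "rh phi"
  unfolding phi_def by (intro rh_ev rh_const)

lemma phi_simps [simp]: "phi (const c) = const c" "phi w1 = w1 + w2" "phi w2 = w1 * w2"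
  by (simp_all add: phi_def rh_const)

definition T2 :: "F2poly \<Rightarrow> F2poly poly" where
  "T2 = ev (\<lambda>c. [:const c:]) [:w1, w1 ^ 2:] [:w2, w2 ^ 2:]"

lemma rh_T2: "rh T2"
  unfolding T2_def by (intro rh_ev rh_constT)

lemma T2_simps [simp]: "T2 (const c) = [:const c:]" "T2 w1 = [:w1, w1 ^ 2:]" "T2 w2 = [:w2, w2 ^ 2:]"
  by (simp_all add: T2_def rh_constT)

definition Sq2 :: "nat \<Rightarrow> F2poly \<Rightarrow> F2poly" where
  "Sq2 i p = coeff (T2 p) i"

fun Q2 :: "nat \<Rightarrow> F2poly \<Rightarrow> F2poly" where
  "Q2 0 p = Sq2 1 p"
| "Q2 (Suc n) p = Q2 n (Sq2 (2 ^ Suc n) p) - Sq2 (2 ^ Suc n) (Q2 n p)"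

lemma sq_sum_F2: "((x::F2poly) + y) ^ 2 = x ^ 2 + y ^ 2"
  by (rule char2_sq) simp

lemma phi_T: "map_poly phi (T p) = T2 (phi p)"
proof -
  have r1: "rh (map_poly phi \<circ> T)" by (intro rh_comp rh_map_poly rh_phi rh_T)
  have r2: "rh (T2 \<circ> phi)" by (intro rh_comp rh_phi rh_T2)
  have h0: "phi 0 = 0" by (rule rhD(1)[OF rh_phi])
  have "(map_poly phi \<circ> T) p = (T2 \<circ> phi) p"
  proof (rule rh_unique[OF r1 r2])
    show "\<And>c. (map_poly phi \<circ> T) (const c) = (T2 \<circ> phi) (const c)"
      by (simp add: map_poly_pCons h0)
    show "(map_poly phi \<circ> T) w1 = (T2 \<circ> phi) w1"
      by (simp add: map_poly_pCons h0 rh_power[OF rh_phi] rhD(3)[OF rh_T2] sq_sum_F2)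
    have m: "[:w1, w1 ^ 2:] * [:w2, w2 ^ 2:] = [:w1 * w2, (w1 + w2) * (w1 * w2), (w1 * w2) ^ 2:]"
      apply simp
      apply (rule conjI)
       apply (simp add: algebra_simps power2_eq_square)
      apply (simp add: algebra_simps power2_eq_square)
      done
    show "(map_poly phi \<circ> T) w2 = (T2 \<circ> phi) w2"
      apply (simp add: map_poly_pCons h0 rh_power[OF rh_phi] rhD(4)[OF rh_T2] rhD(3,4)[OF rh_phi])
      apply (rule conjI)
       apply (simp add: algebra_simps power2_eq_square)
      apply (simp add: algebra_simps power2_eq_square)
      done
  qed
  then show ?thesis by simp
qed

lemma Sq_phi: "phi (Sq i p) = Sq2 i (phi p)"
  by (simp add: Sq_T Sq2_def phi_T[symmetric] coeff_map_poly rhD(1)[OF rh_phi])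

lemma Q_phi: "phi (Q n p) = Q2 n (phi p)"
  by (induction n arbitrary: p) (simp_all add: Sq_phi rh_minus[OF rh_phi] del: F2_minus)

lemma Sq2_add: "Sq2 k (p + q) = Sq2 k p + Sq2 k q"
  by (simp add: Sq2_def rhD(3)[OF rh_T2])

lemma Sq2_mult: "Sq2 k (p * q) = (\<Sum>i\<le>k. Sq2 i p * Sq2 (k - i) q)"
  by (simp add: Sq2_def rhD(4)[OF rh_T2] coeff_mult)

lemma Sq2_0: "Sq2 0 p = p"
proof -
  have r1: "rh ((\<lambda>P. coeff P 0) \<circ> T2)" by (intro rh_comp rh_coeff0 rh_T2)
  have r2: "rh (\<lambda>p::F2poly. p)" by (simp add: rh_def)
  have "((\<lambda>P. coeff P 0) \<circ> T2) p = p"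
    by (rule rh_unique[OF r1 r2]) auto
  then show ?thesis by (simp add: Sq2_def)
qed

lemma Sq2_w1: "Sq2 k w1 = (if k = 0 then w1 else if k = 1 then w1 ^ 2 else 0)"
  by (cases k; cases "k - 1") (auto simp: Sq2_def coeff_pCons)

lemma Sq2_w2: "Sq2 k w2 = (if k = 0 then w2 else if k = 1 then w2 ^ 2 else 0)"
  by (cases k; cases "k - 1") (auto simp: Sq2_def coeff_pCons)

lemma lin_frob: "([:x, x ^ 2:] :: F2poly poly) ^ (2 ^ j) = [:x ^ (2 ^ j):] + monom (x ^ (2 * 2 ^ j)) (2 ^ j)"
proof -
  have "[:x, x ^ 2:] = [:x:] + monom (x ^ 2) 1" by (simp add: monom_Suc monom_0)
  then have "([:x, x ^ 2:] :: F2poly poly) ^ (2 ^ j) = [:x:] ^ (2 ^ j) + monom (x ^ 2) 1 ^ (2 ^ j)"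
    by (simp add: char2_frob)
  also have "\<dots> = [:x ^ (2 ^ j):] + monom (x ^ (2 * 2 ^ j)) (2 ^ j)"
    by (simp add: const_pow monom_power power_mult)
  finally show ?thesis .
qed

lemma Sq2_w1_pow: "Sq2 k (w1 ^ (2 ^ j)) = coeff [:w1 ^ (2 ^ j):] k + coeff (monom (w1 ^ (2 * 2 ^ j)) (2 ^ j)) k"
  by (simp add: Sq2_def rh_power[OF rh_T2] lin_frob del: coeff_monom)

lemma Sq2_w2_pow: "Sq2 k (w2 ^ (2 ^ j)) = coeff [:w2 ^ (2 ^ j):] k + coeff (monom (w2 ^ (2 * 2 ^ j)) (2 ^ j)) k"
  by (simp add: Sq2_def rh_power[OF rh_T2] lin_frob del: coeff_monom)

lemma der_sq: "der D \<Longrightarrow> D (x ^ 2) = 0"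
  by (simp add: power2_eq_square derD mult.commute)


lemma C_add:
  assumes D: "der Qd"
  shows "Qd (Sq2 k (p + q)) - Sq2 k (Qd (p + q)) = (Qd (Sq2 k p) - Sq2 k (Qd p)) + (Qd (Sq2 k q) - Sq2 k (Qd q))"
  by (simp add: Sq2_add derD[OF D] algebra_simps)

lemma C_mult:
  assumes D: "der Qd"
  defines "C \<equiv> \<lambda>k p. Qd (Sq2 k p) - Sq2 k (Qd p)"
  shows "C k (p * q) = (\<Sum>i\<le>k. C i p * Sq2 (k - i) q) + (\<Sum>i\<le>k. Sq2 i p * C (k - i) q)"
proof -
  have "Qd (Sq2 k (p * q)) = (\<Sum>i\<le>k. Qd (Sq2 i p) * Sq2 (k - i) q) + (\<Sum>i\<le>k. Sq2 i p * Qd (Sq2 (k - i) q))"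
    by (simp add: Sq2_mult der_sum[OF D] derD[OF D] sum.distrib)
  moreover have "Sq2 k (Qd (p * q)) = (\<Sum>i\<le>k. Sq2 i (Qd p) * Sq2 (k - i) q) + (\<Sum>i\<le>k. Sq2 i p * Sq2 (k - i) (Qd q))"
    by (simp add: Sq2_mult derD[OF D] Sq2_add)
  ultimately show ?thesis
    unfolding C_def by (simp add: sum.distrib distrib_right distrib_left add_ac)
qed

lemma C_0: "Qd (Sq2 0 p) - Sq2 0 (Qd p) = 0"
  by (simp add: Sq2_0)

lemma coeff_const': "coeff [:a:] n = (if n = 0 then a else 0)"
  by (cases n) auto

lemma sum_single:
  fixes j k :: nat
  assumes "j \<le> k" "\<And>i. i \<le> k \<Longrightarrow> i \<noteq> j \<Longrightarrow> f i = (0::F2poly)"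
  shows "(\<Sum>i\<le>k. f i) = f j"
proof -
  have "(\<Sum>i\<le>k. f i) = f j + (\<Sum>i\<in>{..k} - {j}. f i)"
    using assms(1) by (intro sum.remove) auto
  also have "(\<Sum>i\<in>{..k} - {j}. f i) = 0"
    using assms(2) by (intro sum.neutral) auto
  finally show ?thesis by simp
qed

lemma C_der:
  assumes D: "der Qd"
  defines "C \<equiv> \<lambda>k p. Qd (Sq2 k p) - Sq2 k (Qd p)"
  assumes small: "\<And>i p. 0 < i \<Longrightarrow> i < k \<Longrightarrow> C i p = 0"
  shows "der (C k)"
  unfolding der_def
proof (intro conjI allI)
  fix p q
  show "C k (p + q) = C k p + C k q"
    unfolding C_def by (rule C_add[OF D])
  have z: "\<And>i p. i < k \<Longrightarrow> C i p = 0"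
    using small C_0 unfolding C_def by (metis neq0_conv)
  have "C k (p * q) = (\<Sum>i\<le>k. C i p * Sq2 (k - i) q) + (\<Sum>i\<le>k. Sq2 i p * C (k - i) q)"
    unfolding C_def by (rule C_mult[OF D])
  also have "(\<Sum>i\<le>k. C i p * Sq2 (k - i) q) = C k p * Sq2 (k - k) q"
    by (rule sum_single) (auto simp: z)
  also have "(\<Sum>i\<le>k. Sq2 i p * C (k - i) q) = Sq2 0 p * C (k - 0) q"
    by (rule sum_single) (auto simp: z)
  finally show "C k (p * q) = C k p * q + p * C k q"
    by (simp add: Sq2_0)
qed

lemma comm_step:
  assumes D: "der Qd" and N: "N = 2 ^ Suc j" and q1: "Qd w1 = w1 ^ N" and q2: "Qd w2 = w2 ^ N"
  defines "C \<equiv> \<lambda>k p. Qd (Sq2 k p) - Sq2 k (Qd p)"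
  shows "der (C N) \<and> C N w1 = w1 ^ (2 * N) \<and> C N w2 = w2 ^ (2 * N)"
proof -
  have N2: "N \<ge> 2" using N by simp
  have p1: "\<And>k. Sq2 k (w1 ^ N) = coeff [:w1 ^ N:] k + coeff (monom (w1 ^ (2 * N)) N) k"
    unfolding N by (rule Sq2_w1_pow)
  have p2: "\<And>k. Sq2 k (w2 ^ N) = coeff [:w2 ^ N:] k + coeff (monom (w2 ^ (2 * N)) N) k"
    unfolding N by (rule Sq2_w2_pow)
  have small: "\<And>k p. 0 < k \<Longrightarrow> k < N \<Longrightarrow> C k p = 0"
  proof -
    fix k p
    show "0 < k \<Longrightarrow> k < N \<Longrightarrow> C k p = 0"
    proof (induction k arbitrary: p rule: less_induct)
      case (less k)
      have dk: "der (C k)"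
        unfolding C_def by (rule C_der[OF D]) (use less in \<open>auto simp: C_def\<close>)
      have s1: "Sq2 k (w1 ^ N) = 0" "Sq2 k (w2 ^ N) = 0"
        using less.prems by (simp_all add: p1 p2 coeff_const')
      have c1: "C k w1 = 0"
        using less.prems s1 by (auto simp: C_def Sq2_w1 q1 der_sq[OF D] der_0[OF D])
      have c2: "C k w2 = 0"
        using less.prems s1 by (auto simp: C_def Sq2_w2 q2 der_sq[OF D] der_0[OF D])
      show ?case by (rule der_zero[OF dk c1 c2])
    qed
  qed
  have dN: "der (C N)"
    unfolding C_def by (rule C_der[OF D]) (use small in \<open>auto simp: C_def\<close>)
  have "C N w1 = w1 ^ (2 * N)"
    using N2 by (simp add: C_def Sq2_w1 q1 p1 der_0[OF D] power_mult coeff_const')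
  moreover have "C N w2 = w2 ^ (2 * N)"
    using N2 by (simp add: C_def Sq2_w2 q2 p2 der_0[OF D] power_mult coeff_const')
  ultimately show ?thesis using dN by simp
qed

lemma Q2_der: "der (Q2 n) \<and> Q2 n w1 = w1 ^ (2 ^ Suc n) \<and> Q2 n w2 = w2 ^ (2 ^ Suc n)"
proof (induction n)
  case 0
  have "der (Sq2 1)"
    unfolding der_def by (simp add: Sq2_add Sq2_mult Sq2_0 add.commute mult.commute)
  then show ?case by (simp add: Sq2_w1 Sq2_w2)
next
  case (Suc n)
  have "der (\<lambda>p. Q2 n (Sq2 (2 ^ Suc n) p) - Sq2 (2 ^ Suc n) (Q2 n p)) \<and>
        (\<lambda>p. Q2 n (Sq2 (2 ^ Suc n) p) - Sq2 (2 ^ Suc n) (Q2 n p)) w1 = w1 ^ (2 * 2 ^ Suc n) \<and>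
        (\<lambda>p. Q2 n (Sq2 (2 ^ Suc n) p) - Sq2 (2 ^ Suc n) (Q2 n p)) w2 = w2 ^ (2 * 2 ^ Suc n)"
    by (rule comm_step[of "Q2 n" "2 ^ Suc n" n]) (use Suc in auto)
  moreover have "Q2 (Suc n) = (\<lambda>p. Q2 n (Sq2 (2 ^ Suc n) p) - Sq2 (2 ^ Suc n) (Q2 n p))"
    by (rule ext) simp
  ultimately show ?case by (simp del: F2_minus)
qed





lemma coeff_phi0: "coeff (phi r) 0 = coeff r 0"
proof -
  have r1: "rh ((\<lambda>P. coeff P 0) \<circ> phi)" by (intro rh_comp rh_coeff0 rh_phi)
  have "((\<lambda>P. coeff P 0) \<circ> phi) r = coeff r 0"
    by (rule rh_unique[OF r1 rh_coeff0]) (simp_all, simp_all add: w1_def w2_def)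
  then show ?thesis by simp
qed

lemma w1_nz: "w1 \<noteq> 0" by (simp add: w1_def)
lemma w2_nz: "w2 \<noteq> 0" by (simp add: w2_def)

lemma phi_zero: "phi r = 0 \<Longrightarrow> r = 0"
proof (induction r rule: pCons_induct)
  case 0 then show ?case by simp
next
  case (pCons a r)
  have "a = coeff (pCons a r) 0" by simp
  also have "\<dots> = coeff (phi (pCons a r)) 0" by (simp only: coeff_phi0)
  also have "\<dots> = 0" using pCons.prems by simp
  finally have a0: "a = 0" .
  have "pCons a r = w2 * r" using a0 by (simp add: w2_def)
  then have "phi (pCons a r) = (w1 * w2) * phi r" by (simp add: rhD(4)[OF rh_phi])
  then have "phi r = 0" using pCons.prems w1_nz w2_nz by simp
  then have "r = 0" by (rule pCons.IH)
  then show ?case using a0 by simp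
qed

lemma phi_inj: "phi p = phi q \<Longrightarrow> p = q"
  using phi_zero[of "p - q"] by (simp add: rh_minus[OF rh_phi] del: F2_minus)

lemma der_sqpow: "der D \<Longrightarrow> D ((x ^ 2) ^ l) = 0"
  by (induction l) (auto simp: der_1 derD der_sq)

lemma der_oddpow: assumes "der D" shows "D (x ^ (2 * l + 1)) = x ^ (2 * l) * D x"
proof -
  have "x ^ (2 * l + 1) = (x ^ 2) ^ l * x" by (simp add: power_mult)
  then show ?thesis by (simp add: derD[OF assms] der_sqpow[OF assms] power_mult)
qed

lemma F2_add_self2 [simp]: "(y::F2poly) + (y + z) = z"
  by (simp add: add.assoc[symmetric])

lemma wbar_rec: "wbar (Suc (Suc k)) = w1 * wbar (Suc k) + w2 * wbar k"
  by simp

lemma phi_wbar: "phi (wbar (k + 2) + w2 * wbar k) = w1 ^ (k + 2) + w2 ^ (k + 2)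
   \<and> phi (wbar (k + 3) + w2 * wbar (k + 1)) = w1 ^ (k + 3) + w2 ^ (k + 3)"
proof (induction k)
  case 0
  have "phi (wbar 2 + w2 * wbar 0) = w1 ^ 2 + w2 ^ 2"
    by (simp add: numeral_2_eq_2 rhD(3,4)[OF rh_phi] rhD(2)[OF rh_phi] algebra_simps power2_eq_square)
  moreover have "phi (wbar 3 + w2 * wbar 1) = w1 ^ 3 + w2 ^ 3"
    by (simp add: numeral_3_eq_3 rhD(3,4)[OF rh_phi] rhD(2)[OF rh_phi] algebra_simps power3_eq_cube)
  ultimately show ?case unfolding add_0 by (rule conjI)
next
  case (Suc k)
  have e: "wbar (Suc k + 3) + w2 * wbar (Suc k + 1)
      = w1 * (wbar (k + 3) + w2 * wbar (k + 1)) + w2 * (wbar (k + 2) + w2 * wbar k)"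
    by (simp add: numeral_3_eq_3 numeral_2_eq_2 algebra_simps)
  have "phi (wbar (Suc k + 3) + w2 * wbar (Suc k + 1))
      = (w1 + w2) * (w1 ^ (k + 3) + w2 ^ (k + 3)) + (w1 * w2) * (w1 ^ (k + 2) + w2 ^ (k + 2))"
    unfolding e using Suc.IH by (simp add: rhD(3,4)[OF rh_phi])
  also have "\<dots> = w1 ^ (Suc k + 3) + w2 ^ (Suc k + 3)"
    by (simp add: algebra_simps power_add numeral_3_eq_3 numeral_2_eq_2)
  finally have c2: "phi (wbar (Suc k + 3) + w2 * wbar (Suc k + 1)) = w1 ^ (Suc k + 3) + w2 ^ (Suc k + 3)" .
  have a1: "Suc k + 2 = k + 3" "Suc k = k + 1" by simp_all
  have c1: "phi (wbar (Suc k + 2) + w2 * wbar (Suc k)) = w1 ^ (Suc k + 2) + w2 ^ (Suc k + 2)"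
    using Suc.IH a1 by metis
  show ?case using c1 c2 by (rule conjI)
qed

lemma LHS_eq:
  fixes n l :: nat
  defines "R \<equiv> (if n = 0 then w1 else wbar (2 ^ Suc n - 1) + w2 * wbar (2 ^ Suc n - 3))"
  shows "Q n (w2 ^ (2 * l + 1)) = w2 ^ (2 * l + 1) * R"
proof (rule phi_inj)
  define N where "N = (2::nat) ^ Suc n"
  have N2: "N \<ge> 2" by (simp add: N_def)
  have dQ: "der (Q2 n)" and q1: "Q2 n w1 = w1 ^ N" and q2: "Q2 n w2 = w2 ^ N"
    using Q2_der[of n] by (auto simp: N_def)
  have phiR: "phi R = w1 ^ (N - 1) + w2 ^ (N - 1)"
  proof (cases n)
    case 0
    then show ?thesis by (simp add: R_def N_def rhD(3)[OF rh_phi])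
  next
    case (Suc n')
    then have N4: "N \<ge> 4" by (simp add: N_def)
    have e: "N - 1 = (N - 3) + 2" using N4 by simp
    have R1: "R = wbar (N - 1) + w2 * wbar (N - 3)" unfolding R_def N_def using Suc by simp
    have R2: "R = wbar (N - 3 + 2) + w2 * wbar (N - 3)" unfolding e[symmetric] by (rule R1)
    have "phi R = w1 ^ (N - 3 + 2) + w2 ^ (N - 3 + 2)" unfolding R2 by (rule phi_wbar[THEN conjunct1])
    then show ?thesis by (simp only: e)
  qed
  have "phi (Q n (w2 ^ (2 * l + 1))) = Q2 n ((w1 * w2) ^ (2 * l + 1))"
    by (simp only: Q_phi rh_power[OF rh_phi] phi_simps)
  also have "\<dots> = (w1 * w2) ^ (2 * l) * (w1 ^ N * w2 + w1 * w2 ^ N)"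
    by (simp only: der_oddpow[OF dQ]) (simp add: derD[OF dQ] q1 q2)
  also have "\<dots> = (w1 * w2) ^ (2 * l + 1) * (w1 ^ (N - 1) + w2 ^ (N - 1))"
  proof -
    have "N = Suc (N - 1)" using N2 by simp
    then have "w1 ^ N = w1 * w1 ^ (N - 1)" "w2 ^ N = w2 * w2 ^ (N - 1)"
      by (metis power_Suc)+
    then show ?thesis by (simp add: algebra_simps)
  qed
  also have "\<dots> = phi (w2 ^ (2 * l + 1) * R)"
    by (simp add: rhD(4)[OF rh_phi] rh_power[OF rh_phi] phiR)
  finally show "phi (Q n (w2 ^ (2 * l + 1))) = phi (w2 ^ (2 * l + 1) * R)" .
qed





lemma I_wbar: assumes "K0 \<le> k" shows "r * wbar k \<in> gr_ideal (Suc K0)"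
proof -
  have "(\<Sum>j\<in>{K0..k}. (if j = k then r else 0) * wbar j) = (\<Sum>j\<in>{K0..k}. if j = k then r * wbar k else 0)"
    by (intro sum.cong) auto
  also have "\<dots> = r * wbar k" using assms by simp
  finally show ?thesis unfolding gr_ideal_def
    by (intro CollectI exI[of _ k] exI[of _ "\<lambda>j. if j = k then r else 0"]) simp
qed

lemma sum_trunc:
  fixes a K K1 :: nat
  assumes "K1 \<le> K"
  shows "(\<Sum>k\<in>{a..K}. if k \<le> K1 then g k else (0::F2poly)) = (\<Sum>k\<in>{a..K1}. g k)"
proof -
  have "(\<Sum>k\<in>{a..K}. if k \<le> K1 then g k else 0) = (\<Sum>k\<in>{k \<in> {a..K}. k \<le> K1}. g k)"
    by (rule sum.inter_filter[symmetric]) simp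
  also have "{k \<in> {a..K}. k \<le> K1} = {a..K1}" using assms by auto
  finally show ?thesis .
qed

lemma I_add: assumes "p \<in> gr_ideal M" "q \<in> gr_ideal M" shows "p + q \<in> gr_ideal M"
proof -
  obtain K1 c1 where p: "p = (\<Sum>k\<in>{M - 1..K1}. c1 k * wbar k)" using assms(1) unfolding gr_ideal_def by blast
  obtain K2 c2 where q: "q = (\<Sum>k\<in>{M - 1..K2}. c2 k * wbar k)" using assms(2) unfolding gr_ideal_def by blast
  define K where "K = max K1 K2"
  define c where "c = (\<lambda>k. (if k \<le> K1 then c1 k else 0) + (if k \<le> K2 then c2 k else 0))"
  have "(\<Sum>k\<in>{M - 1..K}. c k * wbar k)
     = (\<Sum>k\<in>{M - 1..K}. if k \<le> K1 then c1 k * wbar k else 0) + (\<Sum>k\<in>{M - 1..K}. if k \<le> K2 then c2 k * wbar k else 0)"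
    unfolding c_def sum.distrib[symmetric] by (intro sum.cong) (auto simp: distrib_right)
  also have "\<dots> = p + q" unfolding p q K_def by (simp add: sum_trunc)
  finally show ?thesis unfolding gr_ideal_def by (intro CollectI exI[of _ K] exI[of _ c]) simp
qed

lemma I_mult: assumes "p \<in> gr_ideal M" shows "r * p \<in> gr_ideal M"
proof -
  obtain K1 c1 where p: "p = (\<Sum>k\<in>{M - 1..K1}. c1 k * wbar k)" using assms(1) unfolding gr_ideal_def by blast
  have "r * p = (\<Sum>k\<in>{M - 1..K1}. (r * c1 k) * wbar k)" unfolding p by (simp add: sum_distrib_left mult.assoc)
  then show ?thesis unfolding gr_ideal_def by (intro CollectI exI[of _ K1] exI[of _ "\<lambda>k. r * c1 k"]) simp
qed

lemma A_lem:
  assumes K: "1 \<le> K"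
  shows "j + 1 \<le> K \<Longrightarrow> w2 ^ j * wbar (K - j) \<in> gr_ideal (Suc K) \<and> w2 ^ (j + 1) * wbar (K - (j + 1)) \<in> gr_ideal (Suc K)"
proof (induction j)
  case 0
  have a0: "w2 ^ 0 * wbar (K - 0) \<in> gr_ideal (Suc K)" using I_wbar[of K K 1] by simp
  have "wbar (Suc (Suc (K - 1))) = w1 * wbar (Suc (K - 1)) + w2 * wbar (K - 1)" by (rule wbar_rec)
  moreover have "Suc (K - 1) = K" using K by simp
  ultimately have "wbar (Suc K) = w1 * wbar K + w2 * wbar (K - 1)" by simp
  then have e: "w2 * wbar (K - 1) = 1 * wbar (Suc K) + w1 * wbar K" by simp
  have "w2 * wbar (K - 1) \<in> gr_ideal (Suc K)" unfolding e by (intro I_add I_wbar) auto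
  with a0 show ?case by simp
next
  case (Suc j)
  then have ih: "w2 ^ j * wbar (K - j) \<in> gr_ideal (Suc K)" "w2 ^ (j + 1) * wbar (K - (j + 1)) \<in> gr_ideal (Suc K)"
    by auto
  define i where "i = K - (j + 2)"
  have i1: "K - j = Suc (Suc i)" "K - (j + 1) = Suc i" "K - (Suc j + 1) = i" using Suc.prems by (auto simp: i_def)
  have "w2 ^ (Suc j + 1) * wbar (K - (Suc j + 1)) = w2 * (w2 ^ j * wbar (K - j)) + w1 * (w2 ^ (j + 1) * wbar (K - (j + 1)))"
    unfolding i1 wbar_rec by (simp add: algebra_simps)
  also have "\<dots> \<in> gr_ideal (Suc K)" by (rule I_add[OF I_mult[OF ih(1)] I_mult[OF ih(2)]])
  finally show ?case using ih by simp
qed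

lemma A_lem': "1 \<le> K \<Longrightarrow> j \<le> K \<Longrightarrow> w2 ^ j * wbar (K - j) \<in> gr_ideal (Suc K)"
proof (cases j)
  case 0
  assume "1 \<le> K" then show ?thesis using A_lem[of K 0] 0 by simp
next
  case (Suc j')
  assume "1 \<le> K" "j \<le> K" then show ?thesis using A_lem[of K j'] Suc by simp
qed

lemma B_lem:
  assumes K: "1 \<le> K"
  shows "j \<le> K - 1 \<Longrightarrow> w1 ^ j * wbar (K - 1) + w2 ^ j * wbar (K - 1 - j) \<in> gr_ideal (Suc K)"
proof (induction j)
  case 0
  show ?case using I_wbar[of K K 0] by simp
next
  case (Suc j)
  then have ih: "w1 ^ j * wbar (K - 1) + w2 ^ j * wbar (K - 1 - j) \<in> gr_ideal (Suc K)" by simp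
  have a: "w2 ^ j * wbar (K - j) \<in> gr_ideal (Suc K)" using A_lem'[OF K, of j] Suc.prems by simp
  define i where "i = K - 1 - Suc j"
  have i1: "K - j = Suc (Suc i)" "K - 1 - j = Suc i" "K - 1 - Suc j = i" using Suc.prems by (auto simp: i_def)
  have "w1 ^ Suc j * wbar (K - 1) + w2 ^ Suc j * wbar (K - 1 - Suc j)
      = w1 * (w1 ^ j * wbar (K - 1) + w2 ^ j * wbar (K - 1 - j)) + w2 ^ j * wbar (K - j)"
    unfolding i1 wbar_rec by (simp add: algebra_simps)
  also have "\<dots> \<in> gr_ideal (Suc K)" by (rule I_add[OF I_mult[OF ih] a])
  finally show ?case .
qed

theorem proposition5p8:
  fixes n l :: nat
  shows "eq_in_Gr2 (2 ^ (n + 1) + 1 + 2 * l) (Q n (w2 ^ (2 * l + 1)))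
           (w1 ^ (2 * l + 2) * wbar (2 ^ (n + 1) - 1 + 2 * l))"
proof -
  define N where "N = (2::nat) ^ Suc n"
  define K where "K = N + 2 * l"
  define m where "m = 2 * l + 1"
  have N2: "N \<ge> 2" by (simp add: N_def)
  have K1: "1 \<le> K" using N2 by (simp add: K_def)
  have M: "2 ^ (n + 1) + 1 + 2 * l = Suc K" by (simp add: K_def N_def)
  have idx: "2 ^ (n + 1) - 1 + 2 * l = K - 1" using N2 by (simp add: K_def N_def)
  have goal: "Q n (w2 ^ m) + w1 ^ (m + 1) * wbar (K - 1) \<in> gr_ideal (Suc K)"
  proof (cases n)
    case 0
    then have N: "N = 2" by (simp add: N_def)
    have Q: "Q n (w2 ^ m) = w2 ^ m * w1" using LHS_eq[of n l] 0 by (simp add: m_def)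
    have e: "K - 1 - m = 0" by (simp add: K_def N m_def)
    have "Q n (w2 ^ m) + w1 ^ (m + 1) * wbar (K - 1) = w1 * (w1 ^ m * wbar (K - 1) + w2 ^ m * wbar (K - 1 - m))"
      unfolding Q e by (simp add: algebra_simps)
    also have "\<dots> \<in> gr_ideal (Suc K)"
      by (rule I_mult, rule B_lem[OF K1]) (simp add: K_def N m_def)
    finally show ?thesis .
  next
    case (Suc n')
    then have N4: "N \<ge> 4" by (simp add: N_def)
    have Q: "Q n (w2 ^ m) = w2 ^ m * (wbar (N - 1) + w2 * wbar (N - 3))"
      using LHS_eq[of n l] Suc by (simp add: m_def N_def)
    have e1: "K - m = N - 1" "K - 1 - (m + 1) = N - 3" using N4 by (simp_all add: K_def m_def)
    have "Q n (w2 ^ m) + w1 ^ (m + 1) * wbar (K - 1)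
        = w2 ^ m * wbar (K - m) + (w1 ^ (m + 1) * wbar (K - 1) + w2 ^ (m + 1) * wbar (K - 1 - (m + 1)))"
      unfolding Q e1 by (simp add: algebra_simps)
    also have "\<dots> \<in> gr_ideal (Suc K)"
      by (rule I_add[OF A_lem'[OF K1] B_lem[OF K1]]) (use N4 in \<open>simp_all add: K_def m_def\<close>)
    finally show ?thesis .
  qed
  show ?thesis
    unfolding eq_in_Gr2_def M idx F2_minus using goal by (simp add: m_def)
qed


end
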